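(* (i) $(\mathfrak{D},\cdot)$ is a group. (ii) The multiplication $\mathfrak{D}\times\mathfrak{D}\to\mathfrak{D}$, $(A,B)\mapsto A\cdot B$, is continuous in the Fréchet topology of $\mathfrak{D}$. (iii) The inversion $\mathfrak{D}\to\mathfrak{D}$, $A\mapsto A^{-1}$, is continuous in the Fréchet topology of $\mathfrak{D}$.
   Context: $\mathfrak{D}$ is the set of linear maps $T=\sum_{\alpha\in\mathbb{N}_0^n}q_\alpha\partial^\alpha$ on $\mathbb{R}[x_1,\dots,x_n]$ with $q_\alpha\in\mathbb{R}[x_1,\dots,x_n]_{\le|\alpha|}$ (degree $\le|\alpha|$) for all $\alpha$ and $\ker T=\{0\}$; the product is composition. Its Fréchet topology is that of coordinate-wise convergence of the coefficients $c_{\alpha,\beta}$ in $q_\alpha=\sum_{|\beta|\le|\alpha|}c_{\alpha,\beta}x^\beta$. *)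

theory Defs
  imports "HOL-Analysis.Analysis" "HOL-Algebra.Group"
begin

(* Variables x_i are indexed by a finite type 'n (so n = CARD('n)).
   A multi-index is a function 'n => nat; a polynomial in R[x_1..x_n] is its
   coefficient function (multi-index => real) with finite support. *)

type_synonym 'n mi = "'n \<Rightarrow> nat"

definition mdeg :: "('n::finite) mi \<Rightarrow> nat" where
  "mdeg a = (\<Sum>i\<in>UNIV. a i)"

definition polys :: "(('n::finite) mi \<Rightarrow> real) set" where
  "polys = {p. finite {a. p a \<noteq> 0}}"

definition pmult :: "(('n::finite) mi \<Rightarrow> real) \<Rightarrow> ('n mi \<Rightarrow> real) \<Rightarrow> 'n mi \<Rightarrow> real" where
  "pmult p q g = (\<Sum>a\<in>{a. a \<le> g}. p a * q (\<lambda>i. g i - a i))"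

(* partial derivative d^alpha: d^alpha x^(g+alpha) = prod_i (g_i+alpha_i)!/g_i! x^g *)
definition pder :: "('n::finite) mi \<Rightarrow> ('n mi \<Rightarrow> real) \<Rightarrow> 'n mi \<Rightarrow> real" where
  "pder a p g = (\<Prod>i\<in>UNIV. real (fact (g i + a i)) / real (fact (g i))) * p (\<lambda>i. g i + a i)"

(* Operator T = sum_alpha q_alpha d^alpha with q_alpha = sum_beta c alpha beta x^beta,
   applied to a polynomial p; only the (finitely many) alpha below some monomial
   of p contribute. *)
definition dop :: "(('n::finite) mi \<Rightarrow> 'n mi \<Rightarrow> real) \<Rightarrow> ('n mi \<Rightarrow> real) \<Rightarrow> 'n mi \<Rightarrow> real" where
  "dop c p g = (\<Sum>a\<in>{a. \<exists>b. p b \<noteq> 0 \<and> a \<le> b}. pmult (c a) (pder a p) g)"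

definition Dset :: "(('n::finite) mi \<Rightarrow> 'n mi \<Rightarrow> real) set" where
  "Dset = {c. (\<forall>a b. c a b \<noteq> 0 \<longrightarrow> mdeg b \<le> mdeg a) \<and>
              (\<forall>p\<in>polys. dop c p = (\<lambda>_. 0) \<longrightarrow> p = (\<lambda>_. 0))}"

definition Dmul :: "(('n::finite) mi \<Rightarrow> 'n mi \<Rightarrow> real) \<Rightarrow> ('n mi \<Rightarrow> 'n mi \<Rightarrow> real) \<Rightarrow> 'n mi \<Rightarrow> 'n mi \<Rightarrow> real" where
  "Dmul c d = (THE e. e \<in> Dset \<and> (\<forall>p\<in>polys. dop e p = dop c (dop d p)))"

definition Did :: "('n::finite) mi \<Rightarrow> 'n mi \<Rightarrow> real" where
  "Did a b = (if a = (\<lambda>_. 0) \<and> b = (\<lambda>_. 0) then 1 else 0)"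

definition Dgroup :: "(('n::finite) mi \<Rightarrow> 'n mi \<Rightarrow> real) monoid" where
  "Dgroup = \<lparr>carrier = Dset, mult = Dmul, one = Did\<rparr>"

end

theory Submission
  imports Defs "Jordan_Normal_Form.Determinant"
begin

definition mon :: "('n::finite) mi \<Rightarrow> 'n mi \<Rightarrow> real" where
  "mon g = (\<lambda>h. if h = g then 1 else 0)"
definition msub :: "('n::finite) mi \<Rightarrow> 'n mi \<Rightarrow> 'n mi" where
  "msub g a = (\<lambda>i. g i - a i)"
definition madd :: "('n::finite) mi \<Rightarrow> 'n mi \<Rightarrow> 'n mi" where
  "madd g a = (\<lambda>i. g i + a i)"
definition mfact :: "('n::finite) mi \<Rightarrow> real" where
  "mfact a = (\<Prod>i\<in>UNIV. real (fact (a i)))"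
definition shift :: "(('n::finite) mi \<Rightarrow> real) \<Rightarrow> 'n mi \<Rightarrow> 'n mi \<Rightarrow> real" where
  "shift q m = (\<lambda>g. if m \<le> g then q (msub g m) else 0)"
definition Pk :: "nat \<Rightarrow> (('n::finite) mi \<Rightarrow> real) set" where
  "Pk k = {p. \<forall>b. p b \<noteq> 0 \<longrightarrow> mdeg b \<le> k}"
definition Bk :: "nat \<Rightarrow> ('n::finite) mi set" where
  "Bk k = {b. mdeg b \<le> k}"
definition degok :: "(('n::finite) mi \<Rightarrow> 'n mi \<Rightarrow> real) \<Rightarrow> bool" where
  "degok c \<longleftrightarrow> (\<forall>a b. c a b \<noteq> 0 \<longrightarrow> mdeg b \<le> mdeg a)"

lemma mdeg_le: "a \<le> b \<Longrightarrow> mdeg a \<le> mdeg b"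
  unfolding mdeg_def le_fun_def by (intro sum_mono) auto

lemma mdeg_less: "a \<le> b \<Longrightarrow> a \<noteq> b \<Longrightarrow> mdeg a < mdeg b"
proof -
  assume ab: "a \<le> b" "a \<noteq> b"
  then obtain i where "a i \<noteq> b i" by auto
  with ab have "a i < b i" by (simp add: le_fun_def order_less_le)
  then show ?thesis unfolding mdeg_def using ab(1)
    by (intro sum_strict_mono_ex1) (auto simp: le_fun_def)
qed

lemma mdeg_madd: "mdeg (madd g a) = mdeg g + mdeg a"
  unfolding mdeg_def madd_def by (simp add: sum.distrib)

lemma mdeg_msub: "a \<le> g \<Longrightarrow> mdeg (msub g a) + mdeg a = mdeg g"
proof -
  assume "a \<le> g"
  then have "madd (msub g a) a = g" by (auto simp: madd_def msub_def le_fun_def)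
  then show ?thesis using mdeg_madd by metis
qed

lemma madd_msub: "a \<le> g \<Longrightarrow> madd (msub g a) a = g"
  by (auto simp: madd_def msub_def le_fun_def)

lemma msub_madd: "msub (madd g a) a = g"
  by (auto simp: madd_def msub_def le_fun_def)

lemma le_madd: "a \<le> madd g a"
  by (auto simp: madd_def le_fun_def)

lemma msub_le: "msub g a \<le> g"
  by (auto simp: msub_def le_fun_def)

lemma msub_zero: "msub g (\<lambda>_. 0) = g"
  by (auto simp: msub_def)

lemma msub_self: "msub g g = (\<lambda>_. 0)"
  by (auto simp: msub_def)

lemma finite_Bk: "finite (Bk k :: ('n::finite) mi set)"
proof -
  have "Bk k \<subseteq> PiE UNIV (\<lambda>_::'n. {..k})"
  proof
    fix b :: "'n mi" assume "b \<in> Bk k"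
    then have "b i \<le> k" for i
      unfolding Bk_def mdeg_def using member_le_sum[of i UNIV b] by auto
    then show "b \<in> PiE UNIV (\<lambda>_. {..k})" by (auto simp: PiE_def Pi_def extensional_def)
  qed
  moreover have "finite (PiE UNIV (\<lambda>_::'n. {..k}))" by (intro finite_PiE) auto
  ultimately show ?thesis by (rule finite_subset)
qed

lemma finite_le: "finite {a::('n::finite) mi. a \<le> g}"
proof -
  have "{a. a \<le> g} \<subseteq> Bk (mdeg g)" unfolding Bk_def using mdeg_le by auto
  then show ?thesis using finite_Bk finite_subset by blast
qed

lemma Pk_polys: "Pk k \<subseteq> polys"
proof
  fix p :: "'a mi \<Rightarrow> real" assume "p \<in> Pk k"
  then have "{a. p a \<noteq> 0} \<subseteq> Bk k" unfolding Pk_def Bk_def by auto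
  then show "p \<in> polys" unfolding polys_def using finite_Bk finite_subset by blast
qed

lemma polys_Pk: "p \<in> polys \<Longrightarrow> \<exists>k. p \<in> Pk k"
proof -
  assume "p \<in> polys"
  then have f: "finite {a. p a \<noteq> 0}" unfolding polys_def by auto
  have "p \<in> Pk (\<Sum>a\<in>{a. p a \<noteq> 0}. mdeg a)"
    unfolding Pk_def using member_le_sum[OF _ _ f, of _ mdeg] by auto
  then show ?thesis by blast
qed

lemma Pk_mono: "k \<le> l \<Longrightarrow> p \<in> Pk k \<Longrightarrow> p \<in> Pk l"
  unfolding Pk_def by force

lemma mono_Pk: "b \<in> Bk k \<Longrightarrow> mon b \<in> Pk k"
  unfolding Pk_def Bk_def mon_def by auto

lemma mono_Pk': "mon b \<in> Pk (mdeg b)"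
  unfolding Pk_def mon_def by auto

lemma mfact_pos: "mfact a > 0"
  unfolding mfact_def by (intro prod_pos) auto

lemma mfact_zero[simp]: "mfact (\<lambda>_. 0) = 1"
  unfolding mfact_def by simp

lemma pmult_def': "pmult p q g = (\<Sum>a\<in>{a. a \<le> g}. p a * q (msub g a))"
  unfolding pmult_def msub_def by simp

lemma pder_def': "pder a p g = (\<Prod>i\<in>UNIV. real (fact (g i + a i)) / real (fact (g i))) * p (madd g a)"
  unfolding pder_def madd_def by simp

lemma pmult_mono: "pmult q (mon m) = shift q m"
proof
  fix g
  show "pmult q (mon m) g = shift q m g"
  proof (cases "m \<le> g")
    case True
    have "pmult q (mon m) g = (\<Sum>a\<in>{a. a \<le> g}. if a = msub g m then q a else 0)"
      unfolding pmult_def' mon_def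
    proof (intro sum.cong refl)
      fix a assume "a \<in> {a. a \<le> g}"
      then have "a \<le> g" by simp
      have "msub g a = m \<longleftrightarrow> a = msub g m"
        using True \<open>a \<le> g\<close> by (auto simp: msub_def le_fun_def fun_eq_iff) (metis diff_diff_cancel)+
      then show "q a * (if msub g a = m then 1 else 0) = (if a = msub g m then q a else 0)" by auto
    qed
    also have "\<dots> = q (msub g m)" using finite_le[of g] msub_le[of g m]
      by (subst sum.delta) auto
    finally show ?thesis using True unfolding shift_def by simp
  next
    case False
    have "msub g a \<noteq> m" for a using False msub_le[of g a] by auto
    then show ?thesis using False unfolding pmult_def' mon_def shift_def by simp
  qed
qed

lemma pmult_lincomb: "finite B \<Longrightarrow>
  pmult q (\<lambda>h. \<Sum>b\<in>B. w b * r b h) g = (\<Sum>b\<in>B. w b * pmult q (r b) g)"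
  unfolding pmult_def' by (simp add: sum_distrib_left sum_distrib_right mult_ac sum.swap[of _ B])

lemma pmult_scale: "pmult q (\<lambda>h. k * r h) g = k * pmult q r g"
  unfolding pmult_def' by (simp add: sum_distrib_left mult_ac)

lemma pmult_zero: "pmult q (\<lambda>h. 0) g = 0"
  unfolding pmult_def' by simp

lemma pder_zero_outside: "\<not> (\<exists>b. p b \<noteq> 0 \<and> a \<le> b) \<Longrightarrow> pder a p = (\<lambda>_. 0)"
  unfolding pder_def' using le_madd by fastforce

lemma dop_superset:
  assumes "finite A" "{a. \<exists>b. p b \<noteq> 0 \<and> a \<le> b} \<subseteq> A"
  shows "dop c p g = (\<Sum>a\<in>A. pmult (c a) (pder a p) g)"
  unfolding dop_def
  by (rule sum.mono_neutral_left[OF assms]) (auto simp: pder_zero_outside pmult_zero)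

lemma dop_Bk:
  assumes "p \<in> Pk k"
  shows "dop c p g = (\<Sum>a\<in>Bk k. pmult (c a) (pder a p) g)"
proof (rule dop_superset[OF finite_Bk])
  show "{a. \<exists>b. p b \<noteq> 0 \<and> a \<le> b} \<subseteq> Bk k"
  proof
    fix a assume "a \<in> {a. \<exists>b. p b \<noteq> 0 \<and> a \<le> b}"
    then obtain b where "p b \<noteq> 0" "a \<le> b" by auto
    then show "a \<in> Bk k" using assms mdeg_le[of a b] unfolding Pk_def Bk_def by auto
  qed
qed

lemma pder_mono_le:
  assumes "a \<le> \<gamma>"
  shows "pder a (mon \<gamma>) = (\<lambda>h. (mfact \<gamma> / mfact (msub \<gamma> a)) * mon (msub \<gamma> a) h)"
proof
  fix h
  show "pder a (mon \<gamma>) h = (mfact \<gamma> / mfact (msub \<gamma> a)) * mon (msub \<gamma> a) h"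
  proof (cases "h = msub \<gamma> a")
    case True
    have e: "madd h a = \<gamma>" using True madd_msub[OF assms] by simp
    have "(\<Prod>i\<in>UNIV. real (fact (h i + a i)) / real (fact (h i)))
        = (\<Prod>i\<in>UNIV. real (fact (\<gamma> i)) / real (fact (msub \<gamma> a i)))"
      using True assms by (intro prod.cong refl) (auto simp: msub_def le_fun_def)
    also have "\<dots> = mfact \<gamma> / mfact (msub \<gamma> a)" unfolding mfact_def by (rule prod_dividef)
    finally show ?thesis unfolding pder_def' e using True by (simp add: mon_def)
  next
    case False
    have "madd h a \<noteq> \<gamma>" using False msub_madd by metis
    then show ?thesis using False unfolding pder_def' by (simp add: mon_def)
  qed
qed

lemma pder_mono_nle: "\<not> a \<le> \<gamma> \<Longrightarrow> pder a (mon \<gamma>) = (\<lambda>_. 0)"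
  unfolding pder_def' mon_def using le_madd by fastforce

lemma dop_mono: "dop c (mon \<gamma>) g =
  (\<Sum>a\<in>{a. a \<le> \<gamma>}. (mfact \<gamma> / mfact (msub \<gamma> a)) * shift (c a) (msub \<gamma> a) g)"
proof -
  have "dop c (mon \<gamma>) g = (\<Sum>a\<in>{a. a \<le> \<gamma>}. pmult (c a) (pder a (mon \<gamma>)) g)"
    by (rule dop_superset[OF finite_le]) (auto simp: mon_def split: if_splits)
  also have "\<dots> = (\<Sum>a\<in>{a. a \<le> \<gamma>}. (mfact \<gamma> / mfact (msub \<gamma> a)) * shift (c a) (msub \<gamma> a) g)"
  proof (intro sum.cong refl)
    fix a assume "a \<in> {a. a \<le> \<gamma>}"
    then have "a \<le> \<gamma>" by simp
    then show "pmult (c a) (pder a (mon \<gamma>)) g = (mfact \<gamma> / mfact (msub \<gamma> a)) * shift (c a) (msub \<gamma> a) g"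
      by (simp only: pder_mono_le[OF \<open>a \<le> \<gamma>\<close>] pmult_scale pmult_mono)
  qed
  finally show ?thesis .
qed

lemma pder_lincomb:
  assumes "p \<in> Pk k"
  shows "pder a p = (\<lambda>h. \<Sum>b\<in>Bk k. p b * pder a (mon b) h)"
proof
  fix h
  let ?F = "\<Prod>i\<in>UNIV. real (fact (h i + a i)) / real (fact (h i))"
  have "(\<Sum>b\<in>Bk k. p b * pder a (mon b) h) = (\<Sum>b\<in>Bk k. if b = madd h a then ?F * p b else 0)"
    by (intro sum.cong refl) (auto simp: pder_def' mon_def)
  also have "\<dots> = (if madd h a \<in> Bk k then ?F * p (madd h a) else 0)"
    by (simp only: sum.delta[OF finite_Bk])
  also have "\<dots> = ?F * p (madd h a)" using assms by (auto simp: Pk_def Bk_def)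
  finally show "pder a p h = (\<Sum>b\<in>Bk k. p b * pder a (mon b) h)" unfolding pder_def' by simp
qed

lemma EXP:
  assumes "p \<in> Pk k"
  shows "dop c p g = (\<Sum>b\<in>Bk k. p b * dop c (mon b) g)"
proof -
  have "dop c p g = (\<Sum>a\<in>Bk k. pmult (c a) (pder a p) g)" using dop_Bk[OF assms] .
  also have "\<dots> = (\<Sum>a\<in>Bk k. \<Sum>b\<in>Bk k. p b * pmult (c a) (pder a (mon b)) g)"
    by (subst pder_lincomb[OF assms]) (simp add: pmult_lincomb finite_Bk)
  also have "\<dots> = (\<Sum>b\<in>Bk k. p b * (\<Sum>a\<in>Bk k. pmult (c a) (pder a (mon b)) g))"
    by (subst sum.swap) (simp add: sum_distrib_left)
  also have "\<dots> = (\<Sum>b\<in>Bk k. p b * dop c (mon b) g)"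
    by (intro sum.cong refl) (simp add: dop_Bk[OF mono_Pk])
  finally show ?thesis .
qed

lemma lincomb_Pk: "\<forall>b\<in>B. q b \<in> Pk k \<Longrightarrow> (\<lambda>h. \<Sum>b\<in>B. w b * q b h) \<in> Pk k"
proof -
  assume a: "\<forall>b\<in>B. q b \<in> Pk k"
  show ?thesis unfolding Pk_def
  proof (intro CollectI allI impI)
    fix h assume "(\<Sum>b\<in>B. w b * q b h) \<noteq> 0"
    then obtain b where "b \<in> B" "w b * q b h \<noteq> 0" by (meson sum.neutral)
    then show "mdeg h \<le> k" using a unfolding Pk_def by auto
  qed
qed

lemma LINCOMB:
  assumes "finite B" "\<forall>b\<in>B. q b \<in> Pk k"
  shows "dop c (\<lambda>h. \<Sum>b\<in>B. w b * q b h) g = (\<Sum>b\<in>B. w b * dop c (q b) g)"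
proof -
  have "dop c (\<lambda>h. \<Sum>b\<in>B. w b * q b h) g = (\<Sum>b'\<in>Bk k. (\<Sum>b\<in>B. w b * q b b') * dop c (mon b') g)"
    by (rule EXP[OF lincomb_Pk[OF assms(2)]])
  also have "\<dots> = (\<Sum>b\<in>B. w b * (\<Sum>b'\<in>Bk k. q b b' * dop c (mon b') g))"
    unfolding sum_distrib_right sum_distrib_left
    by (subst sum.swap) (simp add: mult_ac)
  also have "\<dots> = (\<Sum>b\<in>B. w b * dop c (q b) g)"
  proof (intro sum.cong refl)
    fix b assume "b \<in> B"
    then show "w b * (\<Sum>b'\<in>Bk k. q b b' * dop c (mon b') g) = w b * dop c (q b) g"
      using EXP[of "q b" k c g] assms(2) by simp
  qed
  finally show ?thesis .
qed

lemma dop_zero: "dop c (\<lambda>_. 0) = (\<lambda>_. 0)"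
  unfolding dop_def by simp

lemma diff_Pk: "p \<in> Pk k \<Longrightarrow> q \<in> Pk k \<Longrightarrow> (\<lambda>h. p h - q h) \<in> Pk k"
  unfolding Pk_def by (smt (verit) mem_Collect_eq)

lemma dop_diff:
  assumes "p \<in> Pk k" "q \<in> Pk k"
  shows "dop c (\<lambda>h. p h - q h) g = dop c p g - dop c q g"
  using EXP[OF diff_Pk[OF assms]] EXP[OF assms(1)] EXP[OF assms(2)]
  by (simp add: sum_subtractf left_diff_distrib)

lemma sum_nonzero_ex: "(\<Sum>a\<in>A. f a) \<noteq> (0::real) \<Longrightarrow> \<exists>a\<in>A. f a \<noteq> 0"
  by (meson sum.neutral)

lemma degok_mono:
  assumes "degok c" "dop c (mon b) g \<noteq> 0"
  shows "mdeg g \<le> mdeg b"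
proof -
  obtain a where a: "a \<le> b" "shift (c a) (msub b a) g \<noteq> 0"
    using sum_nonzero_ex[OF assms(2)[unfolded dop_mono]] by auto
  then have m: "msub b a \<le> g" "c a (msub g (msub b a)) \<noteq> 0" unfolding shift_def
    by (auto split: if_splits)
  then have "mdeg (msub g (msub b a)) \<le> mdeg a" using assms(1) unfolding degok_def by auto
  moreover have "mdeg (msub g (msub b a)) + mdeg (msub b a) = mdeg g" using mdeg_msub[OF m(1)] .
  moreover have "mdeg (msub b a) + mdeg a = mdeg b" using mdeg_msub[OF a(1)] .
  ultimately show ?thesis by linarith
qed

lemma degok_Pk:
  assumes "degok c" "p \<in> Pk k"
  shows "dop c p \<in> Pk k"
  unfolding Pk_def
proof (intro CollectI allI impI)
  fix g assume "dop c p g \<noteq> 0"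
  then have "(\<Sum>b\<in>Bk k. p b * dop c (mon b) g) \<noteq> 0" using EXP[OF assms(2), of c g] by simp
  then obtain b where "b \<in> Bk k" "p b * dop c (mon b) g \<noteq> 0"
    using sum_nonzero_ex by blast
  then show "mdeg g \<le> k" using degok_mono[OF assms(1)] unfolding Bk_def by force
qed

lemma shift_zero: "shift q (\<lambda>_. 0) = q"
  unfolding shift_def by (auto simp: le_fun_def msub_zero)

lemma unique_mono:
  assumes "\<And>\<gamma>. dop c (mon \<gamma>) = dop d (mon \<gamma>)"
  shows "c = d"
proof -
  have "\<forall>\<gamma>. mdeg \<gamma> = n \<longrightarrow> c \<gamma> = d \<gamma>" for n
  proof (induction n rule: less_induct)
    case (less n)
    show ?case
    proof (intro allI impI)
      fix \<gamma> :: "'a mi" assume n: "mdeg \<gamma> = n"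
      have IH: "c a = d a" if "a \<le> \<gamma>" "a \<noteq> \<gamma>" for a
        using less mdeg_less[OF that] n by blast
      show "c \<gamma> = d \<gamma>"
      proof
        fix g
        have fin: "finite {a. a \<le> \<gamma>}" by (rule finite_le)
        have mem: "\<gamma> \<in> {a. a \<le> \<gamma>}" by simp
        let ?R = "\<lambda>c. (\<Sum>a\<in>{a. a \<le> \<gamma>} - {\<gamma>}. (mfact \<gamma> / mfact (msub \<gamma> a)) * shift (c a) (msub \<gamma> a) g)"
        have "dop c (mon \<gamma>) g = mfact \<gamma> * c \<gamma> g + ?R c"
          unfolding dop_mono sum.remove[OF fin mem] by (simp add: msub_self shift_zero)
        moreover have "dop d (mon \<gamma>) g = mfact \<gamma> * d \<gamma> g + ?R d"
          unfolding dop_mono sum.remove[OF fin mem] by (simp add: msub_self shift_zero)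
        moreover have "?R c = ?R d" using IH by (intro sum.cong refl) auto
        ultimately show "c \<gamma> g = d \<gamma> g" using assms[of \<gamma>] mfact_pos[of \<gamma>] by simp
      qed
    qed
  qed
  then show ?thesis by blast
qed

lemma unique_polys:
  assumes "\<forall>p\<in>polys. dop c p = dop d p"
  shows "c = d"
proof (rule unique_mono)
  fix \<gamma> :: "'a mi"
  have "mon \<gamma> \<in> polys" using Pk_polys mono_Pk' by blast
  then show "dop c (mon \<gamma>) = dop d (mon \<gamma>)" using assms by blast
qed

lemma mono_expand:
  assumes "p \<in> Pk k"
  shows "(\<Sum>b\<in>Bk k. p b * mon b g) = p g"
proof -
  have "(\<Sum>b\<in>Bk k. p b * mon b g) = (\<Sum>b\<in>Bk k. if g = b then p b else 0)"
    by (intro sum.cong refl) (simp add: mon_def)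
  also have "\<dots> = (if g \<in> Bk k then p g else 0)" by (simp only: sum.delta'[OF finite_Bk])
  also have "\<dots> = p g" using assms by (auto simp: Pk_def Bk_def)
  finally show ?thesis .
qed

lemma msub_eq_zero_iff: "\<gamma> \<le> g \<Longrightarrow> msub g \<gamma> = (\<lambda>_. 0) \<longleftrightarrow> g = \<gamma>"
  by (auto simp: msub_def le_fun_def fun_eq_iff) (metis diff_is_0_eq le_antisym)

lemma dop_Did_mono: "dop Did (mon \<gamma>) = mon \<gamma>"
proof
  fix g
  have "dop Did (mon \<gamma>) g = (\<Sum>a\<in>{a. a \<le> \<gamma>}. if a = (\<lambda>_. 0) then mon \<gamma> g else 0)"
    unfolding dop_mono
  proof (intro sum.cong refl)
    fix a assume "a \<in> {a. a \<le> \<gamma>}"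
    show "mfact \<gamma> / mfact (msub \<gamma> a) * shift (Did a) (msub \<gamma> a) g =
         (if a = (\<lambda>_. 0) then mon \<gamma> g else 0)"
    proof (cases "a = (\<lambda>_. 0)")
      case True
      have "shift (Did a) \<gamma> g = mon \<gamma> g"
        unfolding shift_def Did_def mon_def True
        using msub_eq_zero_iff[of \<gamma> g] by auto
      then show ?thesis using True mfact_pos[of \<gamma>] by (simp add: msub_zero)
    qed (auto simp: shift_def Did_def)
  qed
  also have "\<dots> = (if (\<lambda>_. 0) \<in> {a. a \<le> \<gamma>} then mon \<gamma> g else 0)"
    by (simp only: sum.delta[OF finite_le])
  also have "\<dots> = mon \<gamma> g" by (simp add: le_fun_def)
  finally show "dop Did (mon \<gamma>) g = mon \<gamma> g" .
qed

lemma dop_Did: "p \<in> polys \<Longrightarrow> dop Did p = p"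
proof
  fix g assume "p \<in> polys"
  then obtain k where k: "p \<in> Pk k" using polys_Pk by blast
  show "dop Did p g = p g" using EXP[OF k] mono_expand[OF k] by (simp add: dop_Did_mono)
qed

function crep :: "(('n::finite) mi \<Rightarrow> 'n mi \<Rightarrow> real) \<Rightarrow> 'n mi \<Rightarrow> 'n mi \<Rightarrow> real" where
  "crep M \<gamma> = (\<lambda>g. (M \<gamma> g - (\<Sum>a\<in>{a. a \<le> \<gamma> \<and> a \<noteq> \<gamma>}.
      (mfact \<gamma> / mfact (msub \<gamma> a)) * shift (crep M a) (msub \<gamma> a) g)) / mfact \<gamma>)"
  by pat_completeness auto
termination by (relation "Wellfounded.measure (\<lambda>(M, \<gamma>). mdeg \<gamma>)") (auto intro: mdeg_less)

declare crep.simps[simp del]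

lemma dop_crep_mono: "dop (crep M) (mon \<gamma>) = M \<gamma>"
proof
  fix g
  have fin: "finite {a. a \<le> \<gamma>}" by (rule finite_le)
  have mem: "\<gamma> \<in> {a. a \<le> \<gamma>}" by simp
  have e: "{a. a \<le> \<gamma>} - {\<gamma>} = {a. a \<le> \<gamma> \<and> a \<noteq> \<gamma>}" by auto
  let ?R = "(\<Sum>a\<in>{a. a \<le> \<gamma> \<and> a \<noteq> \<gamma>}. (mfact \<gamma> / mfact (msub \<gamma> a)) * shift (crep M a) (msub \<gamma> a) g)"
  have "dop (crep M) (mon \<gamma>) g = mfact \<gamma> * crep M \<gamma> g + ?R"
    unfolding dop_mono sum.remove[OF fin mem] e by (simp add: msub_self shift_zero)
  also have "crep M \<gamma> g = (M \<gamma> g - ?R) / mfact \<gamma>" by (subst crep.simps) simp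
  finally show "dop (crep M) (mon \<gamma>) g = M \<gamma> g" using mfact_pos[of \<gamma>] by simp
qed

lemma crep_degok:
  assumes "\<And>\<gamma>. M \<gamma> \<in> Pk (mdeg \<gamma>)"
  shows "degok (crep M)"
proof -
  have "\<forall>\<gamma> g. mdeg \<gamma> = n \<longrightarrow> crep M \<gamma> g \<noteq> 0 \<longrightarrow> mdeg g \<le> mdeg \<gamma>" for n
  proof (induction n rule: less_induct)
    case (less n)
    show ?case
    proof (intro allI impI)
      fix \<gamma> g :: "'a mi" assume n: "mdeg \<gamma> = n" and nz: "crep M \<gamma> g \<noteq> 0"
      have IH: "mdeg h \<le> mdeg a" if "a \<le> \<gamma>" "a \<noteq> \<gamma>" "crep M a h \<noteq> 0" for a h
        using less mdeg_less[OF that(1,2)] n that(3) by blast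
      have "M \<gamma> g \<noteq> 0 \<or> (\<Sum>a\<in>{a. a \<le> \<gamma> \<and> a \<noteq> \<gamma>}.
          (mfact \<gamma> / mfact (msub \<gamma> a)) * shift (crep M a) (msub \<gamma> a) g) \<noteq> 0"
        using nz by (subst (asm) crep.simps) auto
      then show "mdeg g \<le> mdeg \<gamma>"
      proof
        assume "M \<gamma> g \<noteq> 0" then show ?thesis using assms[of \<gamma>] unfolding Pk_def by auto
      next
        assume "(\<Sum>a\<in>{a. a \<le> \<gamma> \<and> a \<noteq> \<gamma>}.
          (mfact \<gamma> / mfact (msub \<gamma> a)) * shift (crep M a) (msub \<gamma> a) g) \<noteq> 0"
        then obtain a where a: "a \<le> \<gamma>" "a \<noteq> \<gamma>" "shift (crep M a) (msub \<gamma> a) g \<noteq> 0"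
          using sum_nonzero_ex by fastforce
        then have m: "msub \<gamma> a \<le> g" "crep M a (msub g (msub \<gamma> a)) \<noteq> 0" unfolding shift_def
          by (auto split: if_splits)
        have "mdeg (msub g (msub \<gamma> a)) \<le> mdeg a" using IH[OF a(1,2) m(2)] .
        moreover have "mdeg (msub g (msub \<gamma> a)) + mdeg (msub \<gamma> a) = mdeg g" using mdeg_msub[OF m(1)] .
        moreover have "mdeg (msub \<gamma> a) + mdeg a = mdeg \<gamma>" using mdeg_msub[OF a(1)] .
        ultimately show ?thesis by linarith
      qed
    qed
  qed
  then show ?thesis unfolding degok_def by blast
qed

lemma dop_crep: "p \<in> Pk k \<Longrightarrow> dop (crep M) p g = (\<Sum>b\<in>Bk k. p b * M b g)"
  using EXP[of p k "crep M" g] by (simp add: dop_crep_mono)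

lemma Dset_iff: "c \<in> Dset \<longleftrightarrow> degok c \<and> (\<forall>p\<in>polys. dop c p = (\<lambda>_. 0) \<longrightarrow> p = (\<lambda>_. 0))"
  unfolding Dset_def degok_def by auto

lemma dop_polys: "degok c \<Longrightarrow> p \<in> polys \<Longrightarrow> dop c p \<in> polys"
  using polys_Pk degok_Pk Pk_polys by blast

lemma EXP_fun: "p \<in> Pk k \<Longrightarrow> dop c p = (\<lambda>h. \<Sum>b\<in>Bk k. p b * dop c (mon b) h)"
  using EXP by blast

lemma comp_expand:
  assumes "degok d" "p \<in> Pk k"
  shows "dop c (dop d p) g = (\<Sum>b\<in>Bk k. p b * dop c (dop d (mon b)) g)"
proof -
  have "dop c (dop d p) g = dop c (\<lambda>h. \<Sum>b\<in>Bk k. p b * dop d (mon b) h) g"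
    by (simp only: EXP_fun[OF assms(2), of d])
  also have "\<dots> = (\<Sum>b\<in>Bk k. p b * dop c (dop d (mon b)) g)"
    using degok_Pk[OF assms(1) mono_Pk] finite_Bk by (intro LINCOMB) auto
  finally show ?thesis .
qed

definition Mmul :: "(('n::finite) mi \<Rightarrow> 'n mi \<Rightarrow> real) \<Rightarrow> ('n mi \<Rightarrow> 'n mi \<Rightarrow> real) \<Rightarrow> 'n mi \<Rightarrow> 'n mi \<Rightarrow> real" where
  "Mmul c d = (\<lambda>\<gamma>. dop c (dop d (mon \<gamma>)))"

lemma crep_Mmul:
  assumes c: "c \<in> Dset" and d: "d \<in> Dset"
  shows "crep (Mmul c d) \<in> Dset \<and> (\<forall>p\<in>polys. dop (crep (Mmul c d)) p = dop c (dop d p))"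
proof -
  have dc: "degok c" and dd: "degok d" using c d Dset_iff by auto
  have eq: "dop (crep (Mmul c d)) p = dop c (dop d p)" if pp: "p \<in> polys" for p
  proof
    fix g
    obtain k where k: "p \<in> Pk k" using polys_Pk[OF pp] by blast
    show "dop (crep (Mmul c d)) p g = dop c (dop d p) g"
      unfolding dop_crep[OF k] comp_expand[OF dd k] Mmul_def by simp
  qed
  have "degok (crep (Mmul c d))"
    by (rule crep_degok) (simp add: Mmul_def degok_Pk[OF dc degok_Pk[OF dd mono_Pk']])
  moreover have "p = (\<lambda>_. 0)" if "p \<in> polys" "dop (crep (Mmul c d)) p = (\<lambda>_. 0)" for p
  proof -
    have "dop c (dop d p) = (\<lambda>_. 0)" using eq that by simp
    then have "dop d p = (\<lambda>_. 0)" using c dop_polys[OF dd that(1)] Dset_iff by blast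
    then show ?thesis using d that(1) Dset_iff by blast
  qed
  ultimately show ?thesis using eq Dset_iff by blast
qed

lemma Dmul_eq:
  assumes "e \<in> Dset" "\<forall>p\<in>polys. dop e p = dop c (dop d p)"
  shows "Dmul c d = e"
  unfolding Dmul_def
proof (rule the_equality)
  show "e \<in> Dset \<and> (\<forall>p\<in>polys. dop e p = dop c (dop d p))" using assms by blast
next
  fix e' assume "e' \<in> Dset \<and> (\<forall>p\<in>polys. dop e' p = dop c (dop d p))"
  then show "e' = e" using assms by (intro unique_polys) auto
qed

lemma Dmul_crep:
  assumes "c \<in> Dset" "d \<in> Dset"
  shows "Dmul c d = crep (Mmul c d)"
proof (rule Dmul_eq)
  show "crep (Mmul c d) \<in> Dset" using crep_Mmul[OF assms] by blast
  show "\<forall>p\<in>polys. dop (crep (Mmul c d)) p = dop c (dop d p)" using crep_Mmul[OF assms] by blast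
qed

lemma Dmul_Dset: "c \<in> Dset \<Longrightarrow> d \<in> Dset \<Longrightarrow> Dmul c d \<in> Dset"
  by (simp add: Dmul_crep crep_Mmul)

lemma dop_Dmul: "c \<in> Dset \<Longrightarrow> d \<in> Dset \<Longrightarrow> p \<in> polys \<Longrightarrow> dop (Dmul c d) p = dop c (dop d p)"
  by (simp add: Dmul_crep crep_Mmul)

lemma Did_Dset: "Did \<in> Dset"
  unfolding Dset_iff degok_def
proof (intro conjI allI impI ballI)
  fix a b :: "'a mi" assume "Did a b \<noteq> 0"
  then show "mdeg b \<le> mdeg a" by (auto simp: Did_def split: if_splits)
next
  fix p :: "'a mi \<Rightarrow> real" assume "p \<in> polys" "dop Did p = (\<lambda>_. 0)"
  then show "p = (\<lambda>_. 0)" using dop_Did by metis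
qed

lemma Dmul_assoc:
  assumes x: "x \<in> Dset" and y: "y \<in> Dset" and z: "z \<in> Dset"
  shows "Dmul (Dmul x y) z = Dmul x (Dmul y z)"
proof (rule unique_polys, intro ballI)
  fix p :: "'a mi \<Rightarrow> real" assume p: "p \<in> polys"
  have dz: "dop z p \<in> polys" using dop_polys p z Dset_iff by blast
  have xy: "Dmul x y \<in> Dset" using Dmul_Dset[OF x y] .
  have yz: "Dmul y z \<in> Dset" using Dmul_Dset[OF y z] .
  have "dop (Dmul (Dmul x y) z) p = dop (Dmul x y) (dop z p)" using dop_Dmul[OF xy z p] .
  also have "\<dots> = dop x (dop y (dop z p))" using dop_Dmul[OF x y dz] .
  also have "\<dots> = dop x (dop (Dmul y z) p)" using dop_Dmul[OF y z p] by simp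
  also have "\<dots> = dop (Dmul x (Dmul y z)) p" using dop_Dmul[OF x yz p] by simp
  finally show "dop (Dmul (Dmul x y) z) p = dop (Dmul x (Dmul y z)) p" .
qed

lemma Dmul_Did: "x \<in> Dset \<Longrightarrow> Dmul Did x = x"
proof (rule Dmul_eq)
  assume x: "x \<in> Dset"
  then show "x \<in> Dset" .
  show "\<forall>p\<in>polys. dop x p = dop Did (dop x p)"
  proof
    fix p :: "'a mi \<Rightarrow> real" assume "p \<in> polys"
    moreover have "degok x" using x Dset_iff by blast
    ultimately have "dop x p \<in> polys" by (rule dop_polys[rotated])
    then show "dop x p = dop Did (dop x p)" using dop_Did by metis
  qed
qed

definition xsk :: "nat \<Rightarrow> ('n::finite) mi list" where
  "xsk k = (SOME xs. distinct xs \<and> set xs = Bk k)"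

lemma xsk: "distinct (xsk k :: ('n::finite) mi list) \<and> set (xsk k :: ('n::finite) mi list) = Bk k"
proof -
  obtain xs :: "'n mi list" where "set xs = Bk k" "distinct xs"
    using finite_distinct_list[OF finite_Bk] by blast
  then have "\<exists>xs :: 'n mi list. distinct xs \<and> set xs = Bk k" by blast
  then show ?thesis unfolding xsk_def by (rule someI_ex)
qed

lemma xsk_in: "i < length (xsk k :: ('n::finite) mi list) \<Longrightarrow> (xsk k :: ('n::finite) mi list) ! i \<in> Bk k"
proof -
  assume "i < length (xsk k :: ('n::finite) mi list)"
  then have "(xsk k :: ('n::finite) mi list) ! i \<in> set (xsk k :: ('n::finite) mi list)" by (rule nth_mem)
  then show ?thesis using xsk by blast
qed

lemma Bk_idx: "g \<in> Bk k \<Longrightarrow> \<exists>i<length (xsk k :: ('n::finite) mi list). (xsk k :: ('n::finite) mi list) ! i = g"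
proof -
  assume "g \<in> Bk k"
  then have "g \<in> set (xsk k :: ('n::finite) mi list)" using xsk by blast
  then show ?thesis by (simp add: in_set_conv_nth)
qed

lemma mon_idx: "i < length (xsk k :: ('n::finite) mi list) \<Longrightarrow> j < length (xsk k :: ('n::finite) mi list) \<Longrightarrow>
   mon ((xsk k :: ('n::finite) mi list) ! j) ((xsk k :: ('n::finite) mi list) ! i) = (if i = j then 1 else 0)"
proof -
  assume ij: "i < length (xsk k :: ('n::finite) mi list)" "j < length (xsk k :: ('n::finite) mi list)"
  have "(xsk k :: ('n::finite) mi list) ! i = (xsk k :: ('n::finite) mi list) ! j \<longleftrightarrow> i = j"
    using nth_eq_iff_index_eq[OF conjunct1[OF xsk] ij] .
  then show ?thesis unfolding mon_def by simp
qed

lemma lincomb_idx: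
  assumes "j < length (xsk k :: ('n::finite) mi list)"
  shows "(\<Sum>i<length (xsk k :: ('n::finite) mi list). w i * mon ((xsk k :: ('n::finite) mi list) ! i) ((xsk k :: ('n::finite) mi list) ! j)) = w j"
proof -
  have "(\<Sum>i<length (xsk k :: ('n::finite) mi list). w i * mon ((xsk k :: ('n::finite) mi list) ! i) ((xsk k :: ('n::finite) mi list) ! j)) =
        (\<Sum>i<length (xsk k :: ('n::finite) mi list). if i = j then w i else 0)"
    using assms by (intro sum.cong refl) (simp add: mon_idx)
  also have "\<dots> = w j" using assms by (simp only: sum.delta[OF finite_lessThan]) simp
  finally show ?thesis .
qed

lemma mat_vec_entry: "A \<in> carrier_mat n n \<Longrightarrow> v \<in> carrier_vec n \<Longrightarrow> i < n \<Longrightarrow>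
  (A *\<^sub>v v) $ i = (\<Sum>l<n. A $$ (i,l) * v $ l)"
  by (simp add: scalar_prod_def atLeast0LessThan)

lemma mat_mult_entry: "A \<in> carrier_mat n n \<Longrightarrow> B \<in> carrier_mat n n \<Longrightarrow> i < n \<Longrightarrow> j < n \<Longrightarrow>
  (A * B) $$ (i,j) = (\<Sum>l<n. A $$ (i,l) * B $$ (l,j))"
  by (simp add: scalar_prod_def atLeast0LessThan)

definition Amat :: "(('n::finite) mi \<Rightarrow> 'n mi \<Rightarrow> real) \<Rightarrow> nat \<Rightarrow> real mat" where
  "Amat c k = Matrix.mat (length (xsk k :: ('n::finite) mi list)) (length (xsk k :: ('n::finite) mi list))
     (\<lambda>(i,j). dop c (mon ((xsk k :: ('n::finite) mi list) ! j)) ((xsk k :: ('n::finite) mi list) ! i))"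

definition invp :: "(('n::finite) mi \<Rightarrow> 'n mi \<Rightarrow> real) \<Rightarrow> nat \<Rightarrow> ('n mi \<Rightarrow> real) \<Rightarrow> 'n mi \<Rightarrow> real" where
  "invp c k q = (\<lambda>h. \<Sum>i<length (xsk k :: ('n::finite) mi list).
     ((\<Sum>j<length (xsk k :: ('n::finite) mi list). adj_mat (Amat c k) $$ (i,j) * q ((xsk k :: ('n::finite) mi list) ! j))
        / Determinant.det (Amat c k)) * mon ((xsk k :: ('n::finite) mi list) ! i) h)"

lemma Amat_carrier:
  fixes c :: "('n::finite) mi \<Rightarrow> 'n mi \<Rightarrow> real"
  shows "Amat c k \<in> carrier_mat (length (xsk k :: ('n::finite) mi list)) (length (xsk k :: ('n::finite) mi list))"
  unfolding Amat_def by (rule mat_carrier)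

lemma Amat_entry:
  fixes c :: "('n::finite) mi \<Rightarrow> 'n mi \<Rightarrow> real"
  shows "i < length (xsk k :: ('n::finite) mi list) \<Longrightarrow> j < length (xsk k :: ('n::finite) mi list) \<Longrightarrow>
  Amat c k $$ (i,j) = dop c (mon ((xsk k :: ('n::finite) mi list) ! j)) ((xsk k :: ('n::finite) mi list) ! i)"
  unfolding Amat_def by simp

lemma mon_xsk_Pk: "\<forall>i\<in>{..<length (xsk k :: ('n::finite) mi list)}. mon ((xsk k :: ('n::finite) mi list) ! i) \<in> Pk k"
  using xsk_in mono_Pk by blast

lemma det_nz:
  fixes c :: "('n::finite) mi \<Rightarrow> 'n mi \<Rightarrow> real"
  assumes c: "c \<in> Dset"
  shows "Determinant.det (Amat c k) \<noteq> 0"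
proof
  assume det0: "Determinant.det (Amat c k) = 0"
  let ?xs = "xsk k :: ('n::finite) mi list"
  let ?N = "length ?xs"
  obtain v where v: "v \<in> carrier_vec ?N" "v \<noteq> 0\<^sub>v ?N" "Amat c k *\<^sub>v v = 0\<^sub>v ?N"
    using det0 det_0_iff_vec_prod_zero[OF Amat_carrier] by blast
  define p where "p = (\<lambda>h. \<Sum>i<?N. v $ i * mon (?xs ! i) h)"
  have pk: "p \<in> Pk k" unfolding p_def using mon_xsk_Pk by (intro lincomb_Pk) blast
  have dc: "degok c" using c Dset_iff by blast
  have "dop c p = (\<lambda>_. 0)"
  proof
    fix g
    show "dop c p g = 0"
    proof (cases "g \<in> Bk k")
      case True
      then obtain i where i: "i < ?N" "?xs ! i = g" using Bk_idx by blast
      have "dop c p g = (\<Sum>j<?N. v $ j * dop c (mon (?xs ! j)) g)"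
        unfolding p_def using mon_xsk_Pk by (intro LINCOMB) auto
      also have "\<dots> = (\<Sum>j<?N. Amat c k $$ (i,j) * v $ j)"
        using i by (intro sum.cong refl) (simp add: Amat_entry)
      also have "\<dots> = (Amat c k *\<^sub>v v) $ i"
        using mat_vec_entry[OF Amat_carrier v(1) i(1)] by simp
      also have "\<dots> = 0" using v(3) i by simp
      finally show ?thesis .
    next
      case False
      then show ?thesis using degok_Pk[OF dc pk] unfolding Pk_def Bk_def by auto
    qed
  qed
  then have p0: "p = (\<lambda>_. 0)" using c pk Pk_polys Dset_iff by blast
  obtain j where j: "j < ?N" "v $ j \<noteq> 0"
  proof -
    have "\<not> (\<forall>j<?N. v $ j = 0)"
    proof
      assume "\<forall>j<?N. v $ j = 0"
      then have "v = 0\<^sub>v ?N" using v(1) by (intro eq_vecI) auto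
      then show False using v(2) by simp
    qed
    then show ?thesis using that by blast
  qed
  have "p (?xs ! j) = v $ j" unfolding p_def by (rule lincomb_idx[OF j(1)])
  then show False using p0 j(2) by simp
qed

lemma invp_Pk:
  fixes c :: "('n::finite) mi \<Rightarrow> 'n mi \<Rightarrow> real"
  shows "invp c k q \<in> Pk k"
  unfolding invp_def using mon_xsk_Pk by (intro lincomb_Pk) blast

lemma invp_right:
  fixes c :: "('n::finite) mi \<Rightarrow> 'n mi \<Rightarrow> real"
  assumes c: "c \<in> Dset" and q: "q \<in> Pk k"
  shows "dop c (invp c k q) = q"
proof
  fix g
  let ?xs = "xsk k :: ('n::finite) mi list"
  let ?N = "length ?xs"
  let ?A = "Amat c k"
  let ?B = "adj_mat ?A"
  let ?D = "Determinant.det ?A"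
  have A: "?A \<in> carrier_mat ?N ?N" by (rule Amat_carrier)
  have B: "?B \<in> carrier_mat ?N ?N" using adj_mat(1)[OF A] .
  have AB: "?A * ?B = ?D \<cdot>\<^sub>m 1\<^sub>m ?N" using adj_mat(2)[OF A] .
  have D: "?D \<noteq> 0" using det_nz[OF c] .
  have dc: "degok c" using c Dset_iff by blast
  show "dop c (invp c k q) g = q g"
  proof (cases "g \<in> Bk k")
    case True
    then obtain i where i: "i < ?N" "?xs ! i = g" using Bk_idx by blast
    let ?w = "\<lambda>l. (\<Sum>j<?N. ?B $$ (l,j) * q (?xs ! j))"
    have "dop c (invp c k q) g = (\<Sum>l<?N. (?w l / ?D) * dop c (mon (?xs ! l)) g)"
      unfolding invp_def using mon_xsk_Pk by (intro LINCOMB) auto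
    also have "\<dots> = (\<Sum>l<?N. ?A $$ (i,l) * ?w l / ?D)"
    proof (intro sum.cong refl)
      fix l assume "l \<in> {..<?N}"
      then have l: "l < ?N" by simp
      have "?A $$ (i,l) = dop c (mon (?xs ! l)) g" using Amat_entry[OF i(1) l] i(2) by simp
      then show "(?w l / ?D) * dop c (mon (?xs ! l)) g = ?A $$ (i,l) * ?w l / ?D"
        by (simp add: field_simps)
    qed
    also have "\<dots> = (\<Sum>l<?N. ?A $$ (i,l) * ?w l) / ?D"
      by (simp only: sum_divide_distrib)
    also have "(\<Sum>l<?N. ?A $$ (i,l) * ?w l) = (\<Sum>l<?N. \<Sum>j<?N. ?A $$ (i,l) * ?B $$ (l,j) * q (?xs ! j))"
      by (simp add: sum_distrib_left mult.assoc)
    also have "\<dots> = (\<Sum>j<?N. \<Sum>l<?N. ?A $$ (i,l) * ?B $$ (l,j) * q (?xs ! j))"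
      by (rule sum.swap)
    also have "\<dots> = (\<Sum>j<?N. (?A * ?B) $$ (i,j) * q (?xs ! j))"
      using i by (intro sum.cong refl) (simp add: mat_mult_entry[OF A B] sum_distrib_right)
    also have "\<dots> = (\<Sum>j<?N. if i = j then ?D * q (?xs ! j) else 0)"
      using i unfolding AB by (intro sum.cong refl) simp
    also have "\<dots> = ?D * q g" using i by (simp only: sum.delta'[OF finite_lessThan]) simp
    finally show ?thesis using D by simp
  next
    case False
    have "dop c (invp c k q) \<in> Pk k" using degok_Pk[OF dc invp_Pk[of c k q]] .
    then have "dop c (invp c k q) g = 0" using False unfolding Pk_def Bk_def by auto
    moreover have "q g = 0" using q False unfolding Pk_def Bk_def by auto
    ultimately show ?thesis by simp
  qed
qed

definition Minv :: "(('n::finite) mi \<Rightarrow> 'n mi \<Rightarrow> real) \<Rightarrow> 'n mi \<Rightarrow> 'n mi \<Rightarrow> real" where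
  "Minv c = (\<lambda>\<gamma>. invp c (mdeg \<gamma>) (mon \<gamma>))"

lemma Minv_Pk:
  fixes c :: "('n::finite) mi \<Rightarrow> 'n mi \<Rightarrow> real"
  shows "Minv c \<gamma> \<in> Pk (mdeg \<gamma>)"
  unfolding Minv_def by (rule invp_Pk)

lemma dop_Minv:
  fixes c :: "('n::finite) mi \<Rightarrow> 'n mi \<Rightarrow> real"
  shows "c \<in> Dset \<Longrightarrow> dop c (Minv c \<gamma>) = mon \<gamma>"
  unfolding Minv_def by (rule invp_right) (auto simp: mono_Pk')

lemma inv_right:
  fixes c :: "('n::finite) mi \<Rightarrow> 'n mi \<Rightarrow> real"
  assumes c: "c \<in> Dset" and p: "p \<in> polys"
  shows "dop c (dop (crep (Minv c)) p) = p"
proof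
  fix g
  obtain k where k: "p \<in> Pk k" using polys_Pk[OF p] by blast
  have MP: "\<forall>b\<in>Bk k. Minv c b \<in> Pk k"
    using Minv_Pk Pk_mono unfolding Bk_def by blast
  have "dop (crep (Minv c)) p = (\<lambda>h. \<Sum>b\<in>Bk k. p b * Minv c b h)"
    using dop_crep[OF k] by blast
  then have "dop c (dop (crep (Minv c)) p) g = (\<Sum>b\<in>Bk k. p b * dop c (Minv c b) g)"
    using LINCOMB[OF finite_Bk MP] by simp
  also have "\<dots> = (\<Sum>b\<in>Bk k. p b * mon b g)" by (simp add: dop_Minv[OF c])
  also have "\<dots> = p g" by (rule mono_expand[OF k])
  finally show "dop c (dop (crep (Minv c)) p) g = p g" .
qed

lemma crep_Minv:
  fixes c :: "('n::finite) mi \<Rightarrow> 'n mi \<Rightarrow> real"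
  assumes c: "c \<in> Dset"
  shows "crep (Minv c) \<in> Dset \<and> Dmul (crep (Minv c)) c = Did"
proof -
  let ?d = "crep (Minv c)"
  have dd: "degok ?d" by (rule crep_degok[OF Minv_Pk])
  have dc: "degok c" using c Dset_iff by blast
  have left: "dop ?d (dop c p) = p" if p: "p \<in> polys" for p
  proof -
    obtain k where k: "p \<in> Pk k" using polys_Pk[OF p] by blast
    have cp: "dop c p \<in> Pk k" using degok_Pk[OF dc k] .
    have r: "dop ?d (dop c p) \<in> Pk k" using degok_Pk[OF dd cp] .
    have "dop c (dop ?d (dop c p)) = dop c p" using inv_right[OF c] cp Pk_polys by blast
    then have "dop c (\<lambda>h. dop ?d (dop c p) h - p h) = (\<lambda>_. 0)"
      using dop_diff[OF r k] by auto
    then have "(\<lambda>h. dop ?d (dop c p) h - p h) = (\<lambda>_. 0)"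
      using c diff_Pk[OF r k] Pk_polys Dset_iff by blast
    then show ?thesis by (auto simp: fun_eq_iff)
  qed
  have dD: "?d \<in> Dset"
    unfolding Dset_iff
  proof (intro conjI dd ballI impI)
    fix p :: "'n mi \<Rightarrow> real" assume "p \<in> polys" "dop ?d p = (\<lambda>_. 0)"
    then show "p = (\<lambda>_. 0)" using inv_right[OF c] dop_zero by metis
  qed
  have "Dmul ?d c = Did"
    using Did_Dset dop_Did left by (intro Dmul_eq) auto
  then show ?thesis using dD by blast
qed

lemma Dgroup_group: "group (Dgroup :: (('n::finite) mi \<Rightarrow> 'n mi \<Rightarrow> real) monoid)"
proof (rule groupI)
  show "\<And>x y. x \<in> carrier (Dgroup::('n mi \<Rightarrow> 'n mi \<Rightarrow> real) monoid) \<Longrightarrow> y \<in> carrier Dgroup \<Longrightarrow>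
     x \<otimes>\<^bsub>Dgroup\<^esub> y \<in> carrier Dgroup"
    by (simp add: Dgroup_def Dmul_Dset)
  show "\<one>\<^bsub>Dgroup\<^esub> \<in> carrier (Dgroup::('n mi \<Rightarrow> 'n mi \<Rightarrow> real) monoid)"
    by (simp add: Dgroup_def Did_Dset)
  show "\<And>x y z. x \<in> carrier (Dgroup::('n mi \<Rightarrow> 'n mi \<Rightarrow> real) monoid) \<Longrightarrow> y \<in> carrier Dgroup \<Longrightarrow>
     z \<in> carrier Dgroup \<Longrightarrow> x \<otimes>\<^bsub>Dgroup\<^esub> y \<otimes>\<^bsub>Dgroup\<^esub> z = x \<otimes>\<^bsub>Dgroup\<^esub> (y \<otimes>\<^bsub>Dgroup\<^esub> z)"
    by (simp add: Dgroup_def Dmul_assoc)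
  show "\<And>x. x \<in> carrier (Dgroup::('n mi \<Rightarrow> 'n mi \<Rightarrow> real) monoid) \<Longrightarrow> \<one>\<^bsub>Dgroup\<^esub> \<otimes>\<^bsub>Dgroup\<^esub> x = x"
    by (simp add: Dgroup_def Dmul_Did)
  show "\<And>x. x \<in> carrier (Dgroup::('n mi \<Rightarrow> 'n mi \<Rightarrow> real) monoid) \<Longrightarrow>
     \<exists>y\<in>carrier Dgroup. y \<otimes>\<^bsub>Dgroup\<^esub> x = \<one>\<^bsub>Dgroup\<^esub>"
    using crep_Minv by (simp add: Dgroup_def) blast
qed

lemma Dgroup_inv:
  fixes c :: "('n::finite) mi \<Rightarrow> 'n mi \<Rightarrow> real"
  assumes c: "c \<in> Dset"
  shows "inv\<^bsub>(Dgroup :: ('n mi \<Rightarrow> 'n mi \<Rightarrow> real) monoid)\<^esub> c = crep (Minv c)"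
proof (rule group.inv_equality[OF Dgroup_group])
  show "crep (Minv c) \<otimes>\<^bsub>(Dgroup :: ('n mi \<Rightarrow> 'n mi \<Rightarrow> real) monoid)\<^esub> c = \<one>\<^bsub>Dgroup\<^esub>"
    using crep_Minv[OF c] by (simp add: Dgroup_def)
  show "c \<in> carrier (Dgroup :: ('n mi \<Rightarrow> 'n mi \<Rightarrow> real) monoid)" using c by (simp add: Dgroup_def)
  show "crep (Minv c) \<in> carrier (Dgroup :: ('n mi \<Rightarrow> 'n mi \<Rightarrow> real) monoid)"
    using crep_Minv[OF c] by (simp add: Dgroup_def)
qed

lemma cont_coord:
  assumes "continuous_on S f"
  shows "continuous_on S (\<lambda>x. (f x :: 'a \<Rightarrow> 'b \<Rightarrow> real) a b)"
  using continuous_on_product_then_coordinatewise[OF continuous_on_product_then_coordinatewise[OF assms]] .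

lemma cont_shift:
  assumes "\<And>h. continuous_on S (\<lambda>x. q x h)"
  shows "continuous_on S (\<lambda>x. shift (q x) m g)"
  by (cases "m \<le> g") (simp_all add: shift_def assms)

lemma cont_dop_mono:
  assumes "continuous_on S f"
  shows "continuous_on S (\<lambda>x. dop (f x) (mon b) g)"
  unfolding dop_mono
proof (intro continuous_on_sum continuous_on_mult continuous_on_const cont_shift)
  fix a h
  show "continuous_on S (\<lambda>x. f x a h)" by (rule cont_coord[OF assms])
qed

lemma cont_crep:
  fixes M :: "'x::topological_space \<Rightarrow> ('n::finite) mi \<Rightarrow> 'n mi \<Rightarrow> real"
  assumes "\<And>\<gamma> \<delta>. continuous_on S (\<lambda>x. M x \<gamma> \<delta>)"
  shows "continuous_on S (\<lambda>x. crep (M x) \<alpha> \<beta>)"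
proof -
  have "\<forall>\<alpha> \<beta>. mdeg \<alpha> = n \<longrightarrow> continuous_on S (\<lambda>x. crep (M x) \<alpha> \<beta>)" for n
  proof (induction n rule: less_induct)
    case (less n)
    show ?case
    proof (intro allI impI)
      fix \<alpha> \<beta> :: "'n mi" assume n: "mdeg \<alpha> = n"
      have IH: "continuous_on S (\<lambda>x. crep (M x) a h)" if "a \<in> {a. a \<le> \<alpha> \<and> a \<noteq> \<alpha>}" for a h
        using less mdeg_less[of a \<alpha>] n that by blast
      have "continuous_on S (\<lambda>x. (M x \<alpha> \<beta> - (\<Sum>a\<in>{a. a \<le> \<alpha> \<and> a \<noteq> \<alpha>}.
          (mfact \<alpha> / mfact (msub \<alpha> a)) * shift (crep (M x) a) (msub \<alpha> a) \<beta>)) / mfact \<alpha>)"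
        using mfact_pos[of \<alpha>]
        by (intro continuous_on_divide continuous_on_diff continuous_on_sum continuous_on_mult
            continuous_on_const cont_shift assms IH) auto
      then show "continuous_on S (\<lambda>x. crep (M x) \<alpha> \<beta>)"
        by (subst crep.simps) simp
    qed
  qed
  then show ?thesis by blast
qed

lemma Mmul_expand:
  assumes "d \<in> Dset"
  shows "Mmul c d \<gamma> \<delta> = (\<Sum>b\<in>Bk (mdeg \<gamma>). dop d (mon \<gamma>) b * dop c (mon b) \<delta>)"
proof -
  have "degok d" using assms Dset_iff by blast
  then show ?thesis unfolding Mmul_def using EXP[OF degok_Pk[OF _ mono_Pk']] by blast
qed

lemma cont_Dmul: "continuous_on (Dset \<times> Dset) (\<lambda>(c, d). Dmul c d :: ('n::finite) mi \<Rightarrow> 'n mi \<Rightarrow> real)"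
proof -
  have M: "continuous_on (Dset \<times> Dset) (\<lambda>x. Mmul (fst x) (snd x) \<gamma> \<delta>)" for \<gamma> \<delta> :: "'n mi"
  proof (rule continuous_on_eq)
    show "continuous_on (Dset \<times> Dset) (\<lambda>x. \<Sum>b\<in>Bk (mdeg \<gamma>). dop (snd x) (mon \<gamma>) b * dop (fst x) (mon b) \<delta>)"
      by (intro continuous_on_sum continuous_on_mult cont_dop_mono continuous_on_fst continuous_on_snd
          continuous_on_id)
    show "\<And>x. x \<in> Dset \<times> Dset \<Longrightarrow> (\<Sum>b\<in>Bk (mdeg \<gamma>). dop (snd x) (mon \<gamma>) b * dop (fst x) (mon b) \<delta>)
       = Mmul (fst x) (snd x) \<gamma> \<delta>"
      by (auto simp: Mmul_expand)
  qed
  have "continuous_on (Dset \<times> Dset) (\<lambda>x. crep (Mmul (fst x) (snd x)) :: 'n mi \<Rightarrow> 'n mi \<Rightarrow> real)"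
    apply (rule continuous_on_coordinatewise_then_product)
    apply (rule continuous_on_coordinatewise_then_product)
    apply (rule cont_crep)
    apply (rule M)
    done
  then show ?thesis
    by (rule continuous_on_eq) (auto simp: Dmul_crep)
qed

lemma cont_det:
  assumes "\<And>x. x \<in> S \<Longrightarrow> A x \<in> carrier_mat n n"
    and "\<And>i j. i < n \<Longrightarrow> j < n \<Longrightarrow> continuous_on S (\<lambda>x. A x $$ (i,j) :: real)"
  shows "continuous_on S (\<lambda>x. Determinant.det (A x))"
proof (rule continuous_on_eq)
  show "continuous_on S (\<lambda>x. \<Sum>p\<in>{p. p permutes {0..<n}}. signof p * (\<Prod>i = 0..<n. A x $$ (i, p i)))"
  proof (intro continuous_on_sum continuous_on_mult continuous_on_const continuous_on_prod)
    fix p i assume "p \<in> {p. p permutes {0..<n}}" "i \<in> {0..<n}"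
    then have "i < n" "p i < n" using permutes_in_image by fastforce+
    then show "continuous_on S (\<lambda>x. A x $$ (i, p i))" using assms(2) by blast
  qed
  show "\<And>x. x \<in> S \<Longrightarrow> (\<Sum>p\<in>{p. p permutes {0..<n}}. signof p * (\<Prod>i = 0..<n. A x $$ (i, p i)))
     = Determinant.det (A x)"
    by (rule det_def'[OF assms(1), symmetric])
qed

lemma cont_adj:
  assumes A: "\<And>x. x \<in> S \<Longrightarrow> A x \<in> carrier_mat n n"
    and C: "\<And>i j. i < n \<Longrightarrow> j < n \<Longrightarrow> continuous_on S (\<lambda>x. A x $$ (i,j) :: real)"
    and ij: "i < n" "j < n"
  shows "continuous_on S (\<lambda>x. adj_mat (A x) $$ (i,j))"
proof (rule continuous_on_eq)
  show "continuous_on S (\<lambda>x. (-1)^(j+i) * Determinant.det (mat_delete (A x) j i))"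
  proof (intro continuous_on_mult continuous_on_const cont_det)
    fix x assume "x \<in> S"
    then show "mat_delete (A x) j i \<in> carrier_mat (n-1) (n-1)" using A mat_delete_carrier by blast
  next
    fix i' j' assume i': "i' < n - 1" and j': "j' < n - 1"
    have "continuous_on S (\<lambda>x. A x $$ (if i' < j then i' else Suc i', if j' < i then j' else Suc j'))"
      using i' j' by (intro C) auto
    then show "continuous_on S (\<lambda>x. mat_delete (A x) j i $$ (i', j'))"
    proof (rule continuous_on_eq)
      fix x assume "x \<in> S"
      then have "dim_row (A x) = n" "dim_col (A x) = n" using A by auto
      then show "A x $$ (if i' < j then i' else Suc i', if j' < i then j' else Suc j') = mat_delete (A x) j i $$ (i', j')"
        using i' j' unfolding mat_delete_def by simp
    qed
  qed
  show "\<And>x. x \<in> S \<Longrightarrow> (-1)^(j+i) * Determinant.det (mat_delete (A x) j i) = adj_mat (A x) $$ (i,j)"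
  proof -
    fix x assume "x \<in> S"
    then have "dim_row (A x) = n" "dim_col (A x) = n" using A by auto
    then show "(-1)^(j+i) * Determinant.det (mat_delete (A x) j i) = adj_mat (A x) $$ (i,j)"
      using ij unfolding adj_mat_def cofactor_def by simp
  qed
qed

lemma cont_Amat: "i < length (xsk k :: ('n::finite) mi list) \<Longrightarrow> j < length (xsk k :: 'n mi list) \<Longrightarrow>
  continuous_on (S :: ('n mi \<Rightarrow> 'n mi \<Rightarrow> real) set) (\<lambda>c. Amat c k $$ (i,j))"
  by (rule continuous_on_eq[OF cont_dop_mono[OF continuous_on_id]]) (simp add: Amat_entry)

lemma cont_Minv: "continuous_on Dset (\<lambda>c. Minv c \<gamma> \<delta>)"
  unfolding Minv_def invp_def
  by (intro continuous_on_sum continuous_on_mult continuous_on_divide continuous_on_const cont_adj cont_det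
      Amat_carrier cont_Amat) (auto simp: det_nz Amat_carrier)

lemma cont_inv: "continuous_on Dset (\<lambda>c. inv\<^bsub>(Dgroup :: (('n::finite) mi \<Rightarrow> 'n mi \<Rightarrow> real) monoid)\<^esub> c)"
proof -
  have "continuous_on Dset (\<lambda>c. crep (Minv c) :: 'n mi \<Rightarrow> 'n mi \<Rightarrow> real)"
    by (rule continuous_on_coordinatewise_then_product, rule continuous_on_coordinatewise_then_product,
        rule cont_crep, rule cont_Minv)
  then show ?thesis
    by (rule continuous_on_eq) (simp add: Dgroup_inv)
qed

theorem lemma3p2:
  shows "(\<forall>c\<in>(Dset :: (('n::finite) mi \<Rightarrow> 'n mi \<Rightarrow> real) set). \<forall>d\<in>Dset.
            (\<forall>p\<in>polys. dop c p = dop d p) \<longrightarrow> c = d)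
       \<and> (\<forall>c\<in>(Dset :: ('n mi \<Rightarrow> 'n mi \<Rightarrow> real) set). \<forall>d\<in>Dset.
            Dmul c d \<in> Dset \<and> (\<forall>p\<in>polys. dop (Dmul c d) p = dop c (dop d p)))
       \<and> group (Dgroup :: ('n mi \<Rightarrow> 'n mi \<Rightarrow> real) monoid)
       \<and> continuous_on (Dset \<times> Dset) (\<lambda>(c, d). Dmul c d :: 'n mi \<Rightarrow> 'n mi \<Rightarrow> real)
       \<and> continuous_on Dset (\<lambda>c. inv\<^bsub>(Dgroup :: ('n mi \<Rightarrow> 'n mi \<Rightarrow> real) monoid)\<^esub> c)"
  using unique_polys Dmul_Dset dop_Dmul Dgroup_group cont_Dmul cont_inv by blast

end
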